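(* Consider the controlled SEIR system described in the context. Then: (1) For every $x_0=(S_0,E_0,I_0)\in\Pi$ and every $u\in\mathcal{U}$, the solution $x(\cdot;x_0,u)=(S,E,I)$ satisfies $\lim_{t\to\infty}E(t)=\lim_{t\to\infty}I(t)=0$ and $\lim_{t\to\infty}(S(t)+R(t))=1$, where $R(t):=1-S(t)-E(t)-I(t)$. (2) For every $x_0\in\mathcal{A}$ there exists $u\in\mathcal{U}$ such that $\lim_{t\to\infty}E(t)=\lim_{t\to\infty}I(t)=0$ and $I(t)\le I_{\max}$ for all $t\ge 0$. (3) For every $x_0\in\mathcal{M}$ and every $u\in\mathcal{U}$, $\lim_{t\to\infty}E(t)=\lim_{t\to\infty}I(t)=0$ and $I(t)\le I_{\max}$ for all $t\ge 0$.
   Context: Fix parameters $\eta>0$, $0<\beta_{\min}\le\beta_{\mathrm{nom}}$, $0<\gamma_{\mathrm{nom}}\le\gamma_{\max}<\infty$ and $I_{\max}\in(0,1)$. Let $U:=[\beta_{\min},\beta_{\mathrm{nom}}]\times[\gamma_{\mathrm{nom}},\gamma_{\max}]$ and let $\mathcal{U}$ be the set of measurable, locally integrable functions $u=(\beta,\gamma):[0,\infty)\to U$. Let $\Pi:=\{(S,E,I)\in[0,1]^3: S+E+I\le 1\}$. For $x_0=(S_0,E_0,I_0)\in\Pi$ and $u\in\mathcal{U}$, $x(\cdot;x_0,u)=(S,E,I)$ denotes the unique (absolutely continuous) solution of $\dot S=-\beta(t)SI$, $\dot E=\beta(t)SI-\eta E$, $\dot I=\eta E-\gamma(t)I$ with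 $x(0)=x_0$; it stays in $\Pi$. The removed compartment is $R(t)=1-S(t)-E(t)-I(t)$, which satisfies $\dot R=\gamma(t)I$. Let $G_\Pi:=\{(S,E,I)\in\Pi: I\le I_{\max}\}$. The admissible set is $\mathcal{A}:=\{x_0\in G_\Pi:\exists u\in\mathcal{U}\text{ with } x(t;x_0,u)\in G_\Pi\ \forall t\ge 0\}$, and the maximal robust positively invariant set is $\mathcal{M}:=\{x_0\in G_\Pi: x(t;x_0,u)\in G_\Pi\ \forall t\ge0,\ \forall u\in\mathcal{U}\}$. *)

theory Defs
  imports "HOL-Analysis.Analysis"
begin

definition PiSet :: "(real \<times> real \<times> real) set" where
  "PiSet = {(S,E,I). 0 \<le> S \<and> S \<le> 1 \<and> 0 \<le> E \<and> E \<le> 1 \<and> 0 \<le> I \<and> I \<le> 1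
                     \<and> S + E + I \<le> 1}"

text \<open>Admissible controls u = (beta, gamma): measurable, values in U on [0,inf).
  (Bounded measurable functions are automatically locally integrable.)\<close>
definition controls :: "real \<Rightarrow> real \<Rightarrow> real \<Rightarrow> real \<Rightarrow> ((real \<Rightarrow> real) \<times> (real \<Rightarrow> real)) set" where
  "controls bmin bnom gnom gmax =
     {(\<beta>, \<gamma>). \<beta> \<in> borel_measurable lborel \<and> \<gamma> \<in> borel_measurable lborel \<and>
        (\<forall>t\<ge>0. bmin \<le> \<beta> t \<and> \<beta> t \<le> bnom \<and> gnom \<le> \<gamma> t \<and> \<gamma> t \<le> gmax)}"

text \<open>(S,E,I) is an absolutely continuous (Caratheodory) solution on [0,inf) of the
  controlled SEIR system with initial value x0, written in integral form with
  Lebesgue-integrable integrands.\<close>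
definition seir_sol :: "real \<Rightarrow> (real \<Rightarrow> real) \<Rightarrow> (real \<Rightarrow> real) \<Rightarrow> real \<times> real \<times> real
    \<Rightarrow> (real \<Rightarrow> real) \<Rightarrow> (real \<Rightarrow> real) \<Rightarrow> (real \<Rightarrow> real) \<Rightarrow> bool" where
  "seir_sol \<eta> \<beta> \<gamma> x0 S E I \<longleftrightarrow>
     (S 0, E 0, I 0) = x0 \<and>
     (\<forall>t\<ge>0.
        (\<lambda>s. - \<beta> s * S s * I s) absolutely_integrable_on {0..t} \<and>
        ((\<lambda>s. - \<beta> s * S s * I s) has_integral (S t - S 0)) {0..t} \<and>
        (\<lambda>s. \<beta> s * S s * I s - \<eta> * E s) absolutely_integrable_on {0..t} \<and>
        ((\<lambda>s. \<beta> s * S s * I s - \<eta> * E s) has_integral (E t - E 0)) {0..t} \<and>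
        (\<lambda>s. \<eta> * E s - \<gamma> s * I s) absolutely_integrable_on {0..t} \<and>
        ((\<lambda>s. \<eta> * E s - \<gamma> s * I s) has_integral (I t - I 0)) {0..t})"

definition GPi :: "real \<Rightarrow> (real \<times> real \<times> real) set" where
  "GPi Imax = {(S,E,I) \<in> PiSet. I \<le> Imax}"

definition admissible_set :: "real \<Rightarrow> real \<Rightarrow> real \<Rightarrow> real \<Rightarrow> real \<Rightarrow> real
    \<Rightarrow> (real \<times> real \<times> real) set" where
  "admissible_set \<eta> bmin bnom gnom gmax Imax =
     {x0 \<in> GPi Imax. \<exists>(\<beta>,\<gamma>) \<in> controls bmin bnom gnom gmax.
        \<forall>S E I. seir_sol \<eta> \<beta> \<gamma> x0 S E I \<longrightarrow> (\<forall>t\<ge>0. (S t, E t, I t) \<in> GPi Imax)}"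

definition mrpi_set :: "real \<Rightarrow> real \<Rightarrow> real \<Rightarrow> real \<Rightarrow> real \<Rightarrow> real
    \<Rightarrow> (real \<times> real \<times> real) set" where
  "mrpi_set \<eta> bmin bnom gnom gmax Imax =
     {x0 \<in> GPi Imax. \<forall>(\<beta>,\<gamma>) \<in> controls bmin bnom gnom gmax.
        \<forall>S E I. seir_sol \<eta> \<beta> \<gamma> x0 S E I \<longrightarrow> (\<forall>t\<ge>0. (S t, E t, I t) \<in> GPi Imax)}"

end

theory Submission
  imports Defs
begin


lemma int_split:
  fixes g F :: "real \<Rightarrow> real"
  assumes h: "\<forall>t\<ge>0. (g has_integral (F t - F 0)) {0..t}" and "0 \<le> s" "s \<le> t"
  shows "(g has_integral (F t - F s)) {s..t}"
proof -
  have i1: "(g has_integral (F s - F 0)) {0..s}" using h assms by auto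
  have i2: "(g has_integral (F t - F 0)) {0..t}" using h assms by auto
  have "g integrable_on {s..t}"
    using integrable_subinterval_real[of g 0 t s t] i2 assms by (auto simp: has_integral_integrable)
  then obtain v where v: "(g has_integral v) {s..t}" by blast
  have "(g has_integral (F s - F 0) + v) {0..t}"
    using has_integral_combine[OF assms(2,3) i1 v] .
  with i2 have "F s - F 0 + v = F t - F 0" using has_integral_unique by blast
  hence "v = F t - F s" by simp
  with v show ?thesis by simp
qed

lemma int_cont:
  fixes g F :: "real \<Rightarrow> real"
  assumes h: "\<forall>t\<ge>0. (g has_integral (F t - F 0)) {0..t}"
  shows "continuous_on {0..T} F"
proof (cases "0 \<le> T")
  case False thus ?thesis by simp
next
  case True
  have "g integrable_on {0..T}" using h True by blast
  hence c: "continuous_on {0..T} (\<lambda>x. integral {0..x} g)"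
    by (rule indefinite_integral_continuous_1)
  have "continuous_on {0..T} (\<lambda>x. F 0 + integral {0..x} g)"
    by (intro continuous_intros c)
  moreover have "\<forall>x\<in>{0..T}. F 0 + integral {0..x} g = F x"
  proof
    fix x assume x: "x \<in> {0..T}"
    hence "integral {0..x} g = F x - F 0" using h integral_unique by auto
    thus "F 0 + integral {0..x} g = F x" by simp
  qed
  ultimately show ?thesis using continuous_on_cong by (metis (no_types, lifting))
qed

lemma lastzero:
  fixes f :: "real \<Rightarrow> real"
  assumes c: "continuous_on {a..t} f" and "f a \<ge> 0" "f t < 0" "a \<le> t"
  shows "\<exists>s. a \<le> s \<and> s < t \<and> f s = 0 \<and> (\<forall>r. s < r \<and> r \<le> t \<longrightarrow> f r < 0)"
proof -
  define A where "A = {x \<in> {a..t}. (\<lambda>_. 0) x \<le> f x}"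
  have cl: "closed A" unfolding A_def
    by (rule continuous_on_closed_Collect_le) (auto intro: c continuous_intros)
  have ne: "A \<noteq> {}" using assms unfolding A_def by auto
  have bd: "bdd_above A" unfolding A_def by (auto intro: bdd_aboveI[where M=t])
  define s where "s = Sup A"
  have sA: "s \<in> A" using closed_contains_Sup[OF ne bd cl] s_def by simp
  have up: "\<And>x. x \<in> A \<Longrightarrow> x \<le> s" using cSup_upper[OF _ bd] s_def by blast
  have s1: "a \<le> s" "s \<le> t" "f s \<ge> 0" using sA A_def by auto
  have st: "s < t" using s1 assms by (metis order_le_less not_le)
  have cs: "continuous_on {s..t} f" using continuous_on_subset[OF c] s1 by auto
  obtain z where z: "s \<le> z" "z \<le> t" "f z = 0"
    using IVT2'[of f t 0 s, OF _ _ _ cs] s1 st assms by force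
  have "z \<in> A" using z s1 A_def by auto
  hence "z = s" using up z by force
  moreover have "\<forall>r. s < r \<and> r \<le> t \<longrightarrow> f r < 0"
  proof (intro allI impI)
    fix r assume r: "s < r \<and> r \<le> t"
    show "f r < 0"
    proof (rule ccontr)
      assume "\<not> f r < 0"
      hence "r \<in> A" using r s1 A_def by auto
      thus False using up r by force
    qed
  qed
  ultimately show ?thesis using s1 st z by auto
qed

lemma neg_bound:
  fixes X g :: "real \<Rightarrow> real"
  assumes c: "continuous_on {a..t} X" and "X a \<ge> 0" "a \<le> t" "L \<ge> 0"
    and hi: "\<And>s r. a \<le> s \<Longrightarrow> s \<le> r \<Longrightarrow> r \<le> t \<Longrightarrow> (g has_integral (X r - X s)) {s..r}"
    and lb: "\<And>r. a \<le> r \<Longrightarrow> r \<le> t \<Longrightarrow> X r \<le> 0 \<Longrightarrow> g r \<ge> - L"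
  shows "X t \<ge> - L * (t - a)"
proof (cases "X t \<ge> 0")
  case True
  have "0 \<le> L * (t - a)" using assms by simp
  thus ?thesis using True by linarith
next
  case False
  then obtain s where s: "a \<le> s" "s < t" "X s = 0" "\<forall>r. s < r \<and> r \<le> t \<longrightarrow> X r < 0"
    using lastzero[OF c] assms by force
  have i: "(g has_integral (X t - X s)) {s..t}" by (rule hi) (use s in auto)
  have k: "((\<lambda>_. - L) has_integral (- L) * (t - s)) {s..t}"
    using has_integral_const_real[of "-L" s t] s by (simp add: mult.commute)
  have "(- L) * (t - s) \<le> X t - X s"
  proof (rule has_integral_le[OF k i])
    fix x assume x: "x \<in> {s..t}"
    have "X x \<le> 0"
    proof (cases "x = s")
      case False thus ?thesis using x s(4) by (auto intro: less_imp_le)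
    qed (use s in auto)
    thus "- L \<le> g x" using lb x s by auto
  qed
  moreover have "- L * (t - a) \<le> - L * (t - s)" using s assms by (simp add: mult_left_mono)
  ultimately show ?thesis using s by simp
qed



lemma barbalat:
  fixes f G :: "real \<Rightarrow> real"
  assumes L: "L > 0" and c: "c > 0"
    and fnn: "\<And>t. t \<ge> 0 \<Longrightarrow> f t \<ge> 0"
    and lip: "\<And>s t. 0 \<le> s \<Longrightarrow> s \<le> t \<Longrightarrow> \<bar>f t - f s\<bar> \<le> L * (t - s)"
    and Gnn: "\<And>t. t \<ge> 0 \<Longrightarrow> G t \<ge> 0"
    and Gdec: "\<And>s t. 0 \<le> s \<Longrightarrow> s \<le> t \<Longrightarrow> G t \<le> G s"
    and hint: "\<And>s t. 0 \<le> s \<Longrightarrow> s \<le> t \<Longrightarrow>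
       \<exists>w v. (w has_integral v) {s..t} \<and> (\<forall>r\<in>{s..t}. c * f r \<le> w r) \<and> v \<le> G s - G t"
  shows "(f \<longlongrightarrow> 0) at_top"
proof -
  define g where "g = Inf (G ` {0..})"
  have ne: "G ` {0..} \<noteq> {}" by auto
  have bb: "bdd_below (G ` {0..})" using Gnn by (auto intro: bdd_belowI[where m=0])
  have glow: "\<And>t. t \<ge> 0 \<Longrightarrow> g \<le> G t" unfolding g_def using cInf_lower[OF _ bb] by auto
  show ?thesis unfolding tendsto_iff eventually_at_top_linorder
  proof (intro allI impI)
    fix e :: real assume e: "e > 0"
    define d where "d = e / (4 * L)"
    have d: "d > 0" using e L by (simp add: d_def)
    have "Inf (G ` {0..}) < g + c * d * e / 2" using c d e g_def by simp
    then obtain T0 where T0: "T0 \<ge> 0" "G T0 < g + c * d * e / 2"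
      using cInf_lessD[OF ne] by auto
    show "\<exists>N. \<forall>t\<ge>N. dist (f t) 0 < e"
    proof (intro exI allI impI)
      fix t assume t: "t \<ge> T0"
      hence t0: "t \<ge> 0" using T0 by simp
      obtain w v where wv: "(w has_integral v) {t..t+d}" "\<forall>r\<in>{t..t+d}. c * f r \<le> w r"
          "v \<le> G t - G (t+d)"
        using hint[of t "t+d"] t0 d by auto
      have k: "((\<lambda>_. c * (f t - L * d)) has_integral (c * (f t - L * d)) * d) {t..t+d}"
        using has_integral_const_real[of "c * (f t - L * d)" t "t+d"] d by (simp add: mult.commute)
      have "(c * (f t - L * d)) * d \<le> v"
      proof (rule has_integral_le[OF k wv(1)])
        fix r assume r: "r \<in> {t..t+d}"
        have "\<bar>f r - f t\<bar> \<le> L * (r - t)" using lip[of t r] r t0 by auto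
        moreover have "L * (r - t) \<le> L * d" using r L by (simp add: mult_left_mono)
        ultimately have "f t - L * d \<le> f r" by linarith
        hence "c * (f t - L * d) \<le> c * f r" using c by (simp add: mult_left_mono)
        thus "c * (f t - L * d) \<le> w r" using wv(2) r by fastforce
      qed
      moreover have "G t - G (t+d) \<le> G T0 - g" using Gdec[of T0 t] glow[of "t+d"] T0 t d by auto
      ultimately have "(c * (f t - L * d)) * d < c * d * e / 2" using wv(3) T0 by linarith
      hence "c * d * (f t - L * d) < c * d * (e / 2)" by (simp add: algebra_simps)
      hence "f t - L * d < e / 2" using c d by (simp add: mult_less_cancel_left_pos)
      moreover have "L * d = e / 4" using L by (simp add: d_def)
      ultimately have "f t < e" using e by linarith
      thus "dist (f t) 0 < e" using fnn[OF t0] by simp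
    qed
  qed
qed



lemma prod_lb:
  fixes b x y M C B :: real
  assumes "x \<ge> -M" "y \<ge> -M" "\<bar>x\<bar> \<le> C" "\<bar>y\<bar> \<le> C" "M \<ge> 0" "0 \<le> b" "b \<le> B"
  shows "b * x * y \<ge> -(B * M * C)"
proof -
  have C: "C \<ge> 0" using assms by linarith
  have xy: "x * y \<ge> - (M * C)"
  proof (cases "x \<ge> 0")
    case True
    show ?thesis
    proof (cases "y \<ge> 0")
      case True with \<open>x \<ge> 0\<close> have "x * y \<ge> 0" by simp
      thus ?thesis using C assms by (smt (verit) mult_nonneg_nonneg)
    next
      case False
      have "\<bar>x * y\<bar> \<le> C * M" unfolding abs_mult
        using assms False by (intro mult_mono) auto
      thus ?thesis by (simp add: mult.commute)
    qed
  next
    case False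
    have "\<bar>x * y\<bar> \<le> M * C" unfolding abs_mult
      using assms False by (intro mult_mono) auto
    thus ?thesis by linarith
  qed
  have "b * (- (M * C)) \<le> b * (x * y)" by (rule mult_left_mono[OF xy]) (use assms in simp)
  moreover have "b * (M * C) \<le> B * (M * C)" using assms C by (simp add: mult_right_mono)
  ultimately show ?thesis by (simp add: mult.assoc)
qed

lemma positivity:
  fixes \<beta> \<gamma> S E I :: "real \<Rightarrow> real" and \<eta> B :: real
  assumes eta: "\<eta> > 0" and B: "B \<ge> 0"
    and hb: "\<forall>t\<ge>0. 0 \<le> \<beta> t \<and> \<beta> t \<le> B" and hg: "\<forall>t\<ge>0. 0 \<le> \<gamma> t"
    and init: "S 0 \<ge> 0" "E 0 \<ge> 0" "I 0 \<ge> 0"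
    and hS: "\<forall>t\<ge>0. ((\<lambda>s. - \<beta> s * S s * I s) has_integral (S t - S 0)) {0..t}"
    and hE: "\<forall>t\<ge>0. ((\<lambda>s. \<beta> s * S s * I s - \<eta> * E s) has_integral (E t - E 0)) {0..t}"
    and hI: "\<forall>t\<ge>0. ((\<lambda>s. \<eta> * E s - \<gamma> s * I s) has_integral (I t - I 0)) {0..t}"
  shows "\<forall>t\<ge>0. S t \<ge> 0 \<and> E t \<ge> 0 \<and> I t \<ge> 0"
proof -
  define m where "m r = max (max (- S r) (- E r)) (max (- I r) 0)" for r
  have m_ge: "\<And>r. m r \<ge> 0" unfolding m_def by simp
  have main: "\<forall>t\<in>{0..T}. m t \<le> 0" if T: "T > 0" for T
  proof -
    have cS: "continuous_on {0..T} S" using int_cont[OF hS] .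
    have cE: "continuous_on {0..T} E" using int_cont[OF hE] .
    have cI: "continuous_on {0..T} I" using int_cont[OF hI] .
    have cm: "continuous_on {0..T} m" unfolding m_def
      by (intro continuous_intros cS cE cI)
    have "bounded (S ` {0..T})" by (rule compact_imp_bounded[OF compact_continuous_image[OF cS compact_Icc]])
    then obtain a1 where a1: "\<forall>x\<in>S ` {0..T}. \<bar>x\<bar> \<le> a1" unfolding bounded_real by blast
    have "bounded (I ` {0..T})" by (rule compact_imp_bounded[OF compact_continuous_image[OF cI compact_Icc]])
    then obtain a2 where a2: "\<forall>x\<in>I ` {0..T}. \<bar>x\<bar> \<le> a2" unfolding bounded_real by blast
    define C where "C = max 1 (max a1 a2)"
    have C1: "C \<ge> 1" unfolding C_def by simp
    have Cb: "\<And>r. r \<in> {0..T} \<Longrightarrow> \<bar>S r\<bar> \<le> C \<and> \<bar>I r\<bar> \<le> C"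
      using a1 a2 unfolding C_def by force
    define K where "K = B * C + \<eta> + 1"
    have BC: "B * C \<ge> 0" using B C1 by simp
    have K: "K > 0" "B * C \<le> K" "\<eta> \<le> K" unfolding K_def using BC eta by linarith+
    define h where "h = 1 / (2 * K)"
    have h: "h > 0" "h * K = 1/2" unfolding h_def using K by auto
    have step: "\<forall>r\<in>{0..min (t0+h) T}. m r \<le> 0"
      if t0: "0 \<le> t0" "t0 \<le> T" and prev: "\<forall>r\<in>{0..t0}. m r \<le> 0" for t0
    proof -
      define t1 where "t1 = min (t0+h) T"
      have t01: "t0 \<le> t1" "t1 \<le> T" "t1 - t0 \<le> h" unfolding t1_def using t0 h by auto
      have cm1: "continuous_on {t0..t1} m" using continuous_on_subset[OF cm] t0 t01 by auto
      obtain xm where xm: "xm \<in> {t0..t1}" "\<forall>y\<in>{t0..t1}. m y \<le> m xm"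
        using continuous_attains_sup[OF compact_Icc _ cm1] t01 by auto
      define M where "M = m xm"
      have M0: "M \<ge> 0" unfolding M_def by (rule m_ge)
      have mt0: "m t0 \<le> 0" using prev t0 by auto
      hence st0: "S t0 \<ge> 0" "E t0 \<ge> 0" "I t0 \<ge> 0" unfolding m_def by auto
      have ineg: "-M \<le> S r \<and> -M \<le> E r \<and> -M \<le> I r" if "r \<in> {t0..t1}" for r
        using xm(2) that unfolding M_def m_def by fastforce
      have KM: "K * M \<ge> 0" using K M0 by simp
      have bnd: "m t \<le> K * M * h" if t: "t \<in> {t0..t1}" for t
      proof -
        have tt: "t0 \<le> t" "t \<le> t1" using t by auto
        have sub: "{t0..t} \<subseteq> {0..T}" using t0 tt t01 by auto
        have BMC: "B * M * C \<le> K * M" using K M0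
          by (metis mult.commute mult.left_commute mult_right_mono)
        have lbS: "- (K * M) \<le> - \<beta> r * S r * I r" if r: "t0 \<le> r" "r \<le> t" "S r \<le> 0" for r
        proof -
          have r0: "r \<in> {0..T}" "r \<in> {t0..t1}" using r sub tt by auto
          have "\<bar>S r\<bar> \<le> M" using ineg[OF r0(2)] r by auto
          hence "\<bar>\<beta> r * S r * I r\<bar> \<le> B * M * C" unfolding abs_mult
            using hb r0 Cb[OF r0(1)] M0 B by (intro mult_mono) auto
          thus ?thesis using BMC by linarith
        qed
        have lbE: "- (K * M) \<le> \<beta> r * S r * I r - \<eta> * E r" if r: "t0 \<le> r" "r \<le> t" "E r \<le> 0" for r
        proof -
          have r0: "r \<in> {0..T}" "r \<in> {t0..t1}" using r sub tt by auto
          have "\<beta> r * S r * I r \<ge> -(B * M * C)"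
            using prod_lb[of M "S r" "I r" C "\<beta> r" B] ineg[OF r0(2)] Cb[OF r0(1)] M0 hb r0 by auto
          moreover have "\<eta> * E r \<le> 0" using eta r by (simp add: mult_nonneg_nonpos)
          ultimately show ?thesis using BMC by linarith
        qed
        have lbI: "- (K * M) \<le> \<eta> * E r - \<gamma> r * I r" if r: "t0 \<le> r" "r \<le> t" "I r \<le> 0" for r
        proof -
          have r0: "r \<in> {0..T}" "r \<in> {t0..t1}" using r sub tt by auto
          have "\<eta> * (-M) \<le> \<eta> * E r" by (rule mult_left_mono) (use ineg[OF r0(2)] eta in auto)
          moreover have "\<eta> * M \<le> K * M" using K M0 by (simp add: mult_right_mono)
          moreover have "\<gamma> r * I r \<le> 0" using hg r0 r by (simp add: mult_nonneg_nonpos)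
          ultimately show ?thesis by linarith
        qed
        have X: "S t \<ge> - (K * M) * (t - t0)"
          by (rule neg_bound[where g="\<lambda>s. - \<beta> s * S s * I s", OF continuous_on_subset[OF cS sub] st0(1) tt(1) KM],
             rule int_split[OF hS], use t0 in linarith, linarith, rule lbS, assumption+)
        have Y: "E t \<ge> - (K * M) * (t - t0)"
          by (rule neg_bound[where g="\<lambda>s. \<beta> s * S s * I s - \<eta> * E s", OF continuous_on_subset[OF cE sub] st0(2) tt(1) KM],
             rule int_split[OF hE], use t0 in linarith, linarith, rule lbE, assumption+)
        have Z: "I t \<ge> - (K * M) * (t - t0)"
          by (rule neg_bound[where g="\<lambda>s. \<eta> * E s - \<gamma> s * I s", OF continuous_on_subset[OF cI sub] st0(3) tt(1) KM],
             rule int_split[OF hI], use t0 in linarith, linarith, rule lbI, assumption+)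
        have "(K * M) * (t - t0) \<le> K * M * h" using KM tt t01 by (simp add: mult_left_mono)
        thus ?thesis using X Y Z KM h unfolding m_def by (simp add: mult_nonneg_nonneg)
      qed
      have "M \<le> K * M * h" using bnd[OF xm(1)] M_def by simp
      also have "\<dots> = M / 2" using h by (simp add: algebra_simps)
      finally have "M \<le> 0" by simp
      hence "\<forall>r\<in>{t0..t1}. m r \<le> 0" using xm(2) M_def by force
      thus ?thesis using prev t1_def by (metis atLeastAtMost_iff linorder_le_cases)
    qed
    have ind: "\<forall>r\<in>{0..min (real n * h) T}. m r \<le> 0" for n
    proof (induction n)
      case 0
      show ?case using init unfolding m_def by auto
    next
      case (Suc n)
      have "\<forall>r\<in>{0..min (min (real n * h) T + h) T}. m r \<le> 0"
        by (rule step) (use Suc T h in auto)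
      moreover have "min (real (Suc n) * h) T \<le> min (min (real n * h) T + h) T"
        unfolding min_def using h(1) by (auto simp: algebra_simps)
      ultimately show ?case by auto
    qed
    obtain n where n: "T < real n * h" using ex_less_of_nat_mult[OF h(1)] by blast
    show ?thesis using ind[of n] n by auto
  qed
  show ?thesis
  proof (intro allI impI)
    fix t :: real assume t: "t \<ge> 0"
    have "m t \<le> 0" using main[of "t+1"] t by auto
    thus "S t \<ge> 0 \<and> E t \<ge> 0 \<and> I t \<ge> 0" unfolding m_def by auto
  qed
qed



lemma hi_rewrite:
  assumes "(f has_integral i) A" "\<And>x. f x = g x" "i = j"
  shows "(g has_integral j) A"
proof -
  have "f = g" by (rule ext) fact
  thus ?thesis using assms by simp
qed

lemma lip_int:
  fixes g :: "real \<Rightarrow> real"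
  assumes i: "(g has_integral v) {s..t}" and st: "s \<le> t" and b: "\<forall>r\<in>{s..t}. \<bar>g r\<bar> \<le> L"
  shows "\<bar>v\<bar> \<le> L * (t - s)"
proof -
  have k1: "((\<lambda>_. L) has_integral L * (t - s)) {s..t}"
    using has_integral_const_real[of L s t] st by (simp add: mult.commute)
  have k2: "((\<lambda>_. - L) has_integral - L * (t - s)) {s..t}"
    using has_integral_const_real[of "-L" s t] st by (simp add: mult.commute)
  have "v \<le> L * (t - s)" by (rule has_integral_le[OF i k1]) (use b in \<open>auto simp: abs_le_iff\<close>)
  moreover have "- L * (t - s) \<le> v" by (rule has_integral_le[OF k2 i]) (use b in \<open>fastforce simp: abs_le_iff\<close>)
  ultimately show ?thesis by linarith
qed

lemma prod3_bound:
  fixes b x y B :: real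
  assumes "0 \<le> b" "b \<le> B" "0 \<le> x" "x \<le> 1" "0 \<le> y" "y \<le> 1"
  shows "0 \<le> b * x * y" "b * x * y \<le> B"
proof -
  show "0 \<le> b * x * y" using assms by simp
  have "x * y \<le> 1" using assms by (simp add: mult_le_one)
  hence "b * (x * y) \<le> b * 1" using assms by (intro mult_left_mono) auto
  thus "b * x * y \<le> B" using assms by (simp add: mult.assoc)
qed

lemma prod2_bound:
  fixes b y B :: real
  assumes "0 \<le> b" "b \<le> B" "0 \<le> y" "y \<le> 1"
  shows "0 \<le> b * y" "b * y \<le> B"
proof -
  show "0 \<le> b * y" using assms by simp
  have "b * y \<le> b * 1" using assms by (intro mult_left_mono) auto
  thus "b * y \<le> B" using assms by simp
qed

lemma part1:
  fixes \<eta> bmin bnom gnom gmax :: real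
  assumes eta: "\<eta> > 0" and "0 < bmin" "bmin \<le> bnom" and "0 < gnom" "gnom \<le> gmax"
    and x0: "x0 \<in> PiSet" and ctl: "(\<beta>, \<gamma>) \<in> controls bmin bnom gnom gmax"
    and sol: "seir_sol \<eta> \<beta> \<gamma> x0 S E I"
  shows "(E \<longlongrightarrow> 0) at_top \<and> (I \<longlongrightarrow> 0) at_top \<and>
         ((\<lambda>t. S t + (1 - S t - E t - I t)) \<longlongrightarrow> 1) at_top"
proof -
  have hb: "\<forall>t\<ge>0. 0 \<le> \<beta> t \<and> \<beta> t \<le> bnom" using ctl assms unfolding controls_def by force
  have hg: "\<forall>t\<ge>0. gnom \<le> \<gamma> t \<and> \<gamma> t \<le> gmax" using ctl unfolding controls_def by force
  have hg0: "\<forall>t\<ge>0. 0 \<le> \<gamma> t" using hg assms by force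
  have x0e: "(S 0, E 0, I 0) = x0" using sol unfolding seir_sol_def by blast
  hence init: "S 0 \<ge> 0" "E 0 \<ge> 0" "I 0 \<ge> 0" "S 0 + E 0 + I 0 \<le> 1"
    using x0 unfolding PiSet_def by auto
  have hS: "\<forall>t\<ge>0. ((\<lambda>s. - \<beta> s * S s * I s) has_integral (S t - S 0)) {0..t}"
    using sol unfolding seir_sol_def by blast
  have hE: "\<forall>t\<ge>0. ((\<lambda>s. \<beta> s * S s * I s - \<eta> * E s) has_integral (E t - E 0)) {0..t}"
    using sol unfolding seir_sol_def by blast
  have hI: "\<forall>t\<ge>0. ((\<lambda>s. \<eta> * E s - \<gamma> s * I s) has_integral (I t - I 0)) {0..t}"
    using sol unfolding seir_sol_def by blast
  have B: "bnom \<ge> 0" using assms by linarith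
  have pos: "\<forall>t\<ge>0. S t \<ge> 0 \<and> E t \<ge> 0 \<and> I t \<ge> 0"
    by (rule positivity[OF eta B hb hg0 init(1-3) hS hE hI])
  define G where "G t = - (S t + E t)" for t
  define N where "N t = - (S t + E t + I t)" for t
  have hG: "\<forall>t\<ge>0. ((\<lambda>s. \<eta> * E s) has_integral (G t - G 0)) {0..t}"
  proof (intro allI impI)
    fix t :: real assume t: "t \<ge> 0"
    have "((\<lambda>s. - (- \<beta> s * S s * I s + (\<beta> s * S s * I s - \<eta> * E s))) has_integral
          - ((S t - S 0) + (E t - E 0))) {0..t}"
      by (intro has_integral_neg has_integral_add) (use hS hE t in auto)
    thus "((\<lambda>s. \<eta> * E s) has_integral (G t - G 0)) {0..t}"
      by (rule hi_rewrite) (simp_all add: G_def)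
  qed
  have hN: "\<forall>t\<ge>0. ((\<lambda>s. \<gamma> s * I s) has_integral (N t - N 0)) {0..t}"
  proof (intro allI impI)
    fix t :: real assume t: "t \<ge> 0"
    have "((\<lambda>s. - ((- \<beta> s * S s * I s + (\<beta> s * S s * I s - \<eta> * E s)) + (\<eta> * E s - \<gamma> s * I s)))
          has_integral - (((S t - S 0) + (E t - E 0)) + (I t - I 0))) {0..t}"
      by (intro has_integral_neg has_integral_add) (use hS hE hI t in auto)
    thus "((\<lambda>s. \<gamma> s * I s) has_integral (N t - N 0)) {0..t}"
      by (rule hi_rewrite) (simp_all add: N_def)
  qed
  have Nup: "S t + E t + I t \<le> 1" if t: "t \<ge> 0" for t
  proof -
    have "0 \<le> N t - N 0"
      by (rule has_integral_le[OF has_integral_0 hN[rule_format, OF t]])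
         (use hg0 pos in \<open>auto intro: mult_nonneg_nonneg\<close>)
    thus ?thesis using init unfolding N_def by linarith
  qed
  have bnds: "0 \<le> S t \<and> S t \<le> 1 \<and> 0 \<le> E t \<and> E t \<le> 1 \<and> 0 \<le> I t \<and> I t \<le> 1" if "t \<ge> 0" for t
    using pos Nup[OF that] that by force
  have E0: "(E \<longlongrightarrow> 0) at_top"
  proof (rule barbalat[where L="bnom + \<eta>" and c=\<eta> and G="\<lambda>t. - G t"])
    show "bnom + \<eta> > 0" using B eta by linarith
    show "\<eta> > 0" by fact
    show "\<And>t. t \<ge> 0 \<Longrightarrow> E t \<ge> 0" using pos by blast
    show "\<And>t. t \<ge> 0 \<Longrightarrow> - G t \<ge> 0" using pos unfolding G_def by force
    show "\<bar>E t - E s\<bar> \<le> (bnom + \<eta>) * (t - s)" if "0 \<le> s" "s \<le> t" for s t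
    proof (rule lip_int[OF int_split[OF hE that] that(2)])
      show "\<forall>r\<in>{s..t}. \<bar>\<beta> r * S r * I r - \<eta> * E r\<bar> \<le> bnom + \<eta>"
      proof
        fix r assume r: "r \<in> {s..t}"
        hence r0: "r \<ge> 0" using that by auto
        have "0 \<le> \<beta> r * S r * I r" "\<beta> r * S r * I r \<le> bnom"
          using prod3_bound[of "\<beta> r" bnom "S r" "I r"] hb bnds[OF r0] r0 by auto
        moreover have "0 \<le> \<eta> * E r" "\<eta> * E r \<le> \<eta>"
          using prod2_bound[of \<eta> \<eta> "E r"] eta bnds[OF r0] by auto
        ultimately show "\<bar>\<beta> r * S r * I r - \<eta> * E r\<bar> \<le> bnom + \<eta>" by linarith
      qed
    qed
    have gi: "((\<lambda>s. \<eta> * E s) has_integral (G t - G s)) {s..t}" if "0 \<le> s" "s \<le> t" for s t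
      by (rule int_split[OF hG that])
    show "- G t \<le> - G s" if "0 \<le> s" "s \<le> t" for s t
    proof -
      have "0 \<le> G t - G s"
        by (rule has_integral_le[OF has_integral_0 gi[OF that]])
           (use pos eta that in \<open>auto intro: mult_nonneg_nonneg\<close>)
      thus ?thesis by simp
    qed
    show "\<exists>w v. (w has_integral v) {s..t} \<and> (\<forall>r\<in>{s..t}. \<eta> * E r \<le> w r) \<and> v \<le> - G s - - G t"
      if "0 \<le> s" "s \<le> t" for s t
      using gi[OF that] by auto
  qed
  have I0: "(I \<longlongrightarrow> 0) at_top"
  proof (rule barbalat[where L="\<eta> + gmax" and c=gnom and G="\<lambda>t. - N t"])
    show "\<eta> + gmax > 0" using assms by linarith
    show "gnom > 0" by fact
    show "\<And>t. t \<ge> 0 \<Longrightarrow> I t \<ge> 0" using pos by blast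
    show "\<And>t. t \<ge> 0 \<Longrightarrow> - N t \<ge> 0" using pos unfolding N_def by force
    show "\<bar>I t - I s\<bar> \<le> (\<eta> + gmax) * (t - s)" if "0 \<le> s" "s \<le> t" for s t
    proof (rule lip_int[OF int_split[OF hI that] that(2)])
      show "\<forall>r\<in>{s..t}. \<bar>\<eta> * E r - \<gamma> r * I r\<bar> \<le> \<eta> + gmax"
      proof
        fix r assume r: "r \<in> {s..t}"
        hence r0: "r \<ge> 0" using that by auto
        have "0 \<le> \<gamma> r * I r" "\<gamma> r * I r \<le> gmax"
          using prod2_bound[of "\<gamma> r" gmax "I r"] hg[rule_format, OF r0] hg0[rule_format, OF r0] bnds[OF r0] by auto
        moreover have "0 \<le> \<eta> * E r" "\<eta> * E r \<le> \<eta>"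
          using prod2_bound[of \<eta> \<eta> "E r"] eta bnds[OF r0] by auto
        ultimately show "\<bar>\<eta> * E r - \<gamma> r * I r\<bar> \<le> \<eta> + gmax" by linarith
      qed
    qed
    have ni: "((\<lambda>s. \<gamma> s * I s) has_integral (N t - N s)) {s..t}" if "0 \<le> s" "s \<le> t" for s t
      by (rule int_split[OF hN that])
    show "- N t \<le> - N s" if "0 \<le> s" "s \<le> t" for s t
    proof -
      have "0 \<le> N t - N s"
        by (rule has_integral_le[OF has_integral_0 ni[OF that]])
           (use pos hg0 that in \<open>auto intro: mult_nonneg_nonneg\<close>)
      thus ?thesis by simp
    qed
    show "\<exists>w v. (w has_integral v) {s..t} \<and> (\<forall>r\<in>{s..t}. gnom * I r \<le> w r) \<and> v \<le> - N s - - N t"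
      if "0 \<le> s" "s \<le> t" for s t
    proof (intro exI conjI)
      show "((\<lambda>s. \<gamma> s * I s) has_integral (N t - N s)) {s..t}" by (rule ni[OF that])
      show "\<forall>r\<in>{s..t}. gnom * I r \<le> \<gamma> r * I r"
      proof
        fix r assume r: "r \<in> {s..t}"
        hence r0: "r \<ge> 0" using that by auto
        have "gnom \<le> \<gamma> r" using hg r0 by blast
        moreover have "0 \<le> I r" using pos r0 by blast
        ultimately show "gnom * I r \<le> \<gamma> r * I r" by (rule mult_right_mono)
      qed
    qed simp
  qed
  have "((\<lambda>t. 1 - E t - I t) \<longlongrightarrow> 1 - 0 - 0) at_top"
    by (intro tendsto_diff tendsto_const E0 I0)
  moreover have "(\<lambda>t. S t + (1 - S t - E t - I t)) = (\<lambda>t. 1 - E t - I t)" by (rule ext) simp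
  ultimately show ?thesis using E0 I0 by simp
qed


theorem lemma1:
  fixes \<eta> bmin bnom gnom gmax Imax :: real
  assumes "\<eta> > 0" and "0 < bmin" and "bmin \<le> bnom" and "0 < gnom" and "gnom \<le> gmax"
    and "0 < Imax" and "Imax < 1"
  shows
   "(\<forall>x0 \<in> PiSet. \<forall>(\<beta>,\<gamma>) \<in> controls bmin bnom gnom gmax. \<forall>S E I.
       seir_sol \<eta> \<beta> \<gamma> x0 S E I \<longrightarrow>
         (E \<longlongrightarrow> 0) at_top \<and> (I \<longlongrightarrow> 0) at_top \<and>
         ((\<lambda>t. S t + (1 - S t - E t - I t)) \<longlongrightarrow> 1) at_top)
  \<and> (\<forall>x0 \<in> admissible_set \<eta> bmin bnom gnom gmax Imax.
       \<exists>(\<beta>,\<gamma>) \<in> controls bmin bnom gnom gmax. \<forall>S E I.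
         seir_sol \<eta> \<beta> \<gamma> x0 S E I \<longrightarrow>
           (E \<longlongrightarrow> 0) at_top \<and> (I \<longlongrightarrow> 0) at_top \<and> (\<forall>t\<ge>0. I t \<le> Imax))
  \<and> (\<forall>x0 \<in> mrpi_set \<eta> bmin bnom gnom gmax Imax.
       \<forall>(\<beta>,\<gamma>) \<in> controls bmin bnom gnom gmax. \<forall>S E I.
         seir_sol \<eta> \<beta> \<gamma> x0 S E I \<longrightarrow>
           (E \<longlongrightarrow> 0) at_top \<and> (I \<longlongrightarrow> 0) at_top \<and> (\<forall>t\<ge>0. I t \<le> Imax))"
  proof -
  note p1 = part1[OF assms(1-5)]
  have GP: "GPi Imax \<subseteq> PiSet" unfolding GPi_def by auto
  have A: "\<forall>x0 \<in> PiSet. \<forall>(\<beta>,\<gamma>) \<in> controls bmin bnom gnom gmax. \<forall>S E I.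
       seir_sol \<eta> \<beta> \<gamma> x0 S E I \<longrightarrow>
         (E \<longlongrightarrow> 0) at_top \<and> (I \<longlongrightarrow> 0) at_top \<and>
         ((\<lambda>t. S t + (1 - S t - E t - I t)) \<longlongrightarrow> 1) at_top"
  proof (intro ballI allI impI)
    fix x0 p S E I assume x0: "x0 \<in> PiSet" and p: "p \<in> controls bmin bnom gnom gmax"
    obtain \<beta> \<gamma> where pe: "p = (\<beta>, \<gamma>)" by (cases p)
    show "case p of (\<beta>, \<gamma>) \<Rightarrow> \<forall>S E I. seir_sol \<eta> \<beta> \<gamma> x0 S E I \<longrightarrow>
         (E \<longlongrightarrow> 0) at_top \<and> (I \<longlongrightarrow> 0) at_top \<and>
         ((\<lambda>t. S t + (1 - S t - E t - I t)) \<longlongrightarrow> 1) at_top"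
      unfolding pe using p1[OF x0] p pe by simp
  qed
  have B: "\<forall>x0 \<in> admissible_set \<eta> bmin bnom gnom gmax Imax.
       \<exists>(\<beta>,\<gamma>) \<in> controls bmin bnom gnom gmax. \<forall>S E I.
         seir_sol \<eta> \<beta> \<gamma> x0 S E I \<longrightarrow>
           (E \<longlongrightarrow> 0) at_top \<and> (I \<longlongrightarrow> 0) at_top \<and> (\<forall>t\<ge>0. I t \<le> Imax)"
  proof
    fix x0 assume x0: "x0 \<in> admissible_set \<eta> bmin bnom gnom gmax Imax"
    hence xg: "x0 \<in> PiSet" using GP unfolding admissible_set_def by auto
    from x0 obtain \<beta> \<gamma> where c: "(\<beta>, \<gamma>) \<in> controls bmin bnom gnom gmax"
      and inv: "\<forall>S E I. seir_sol \<eta> \<beta> \<gamma> x0 S E I \<longrightarrow> (\<forall>t\<ge>0. (S t, E t, I t) \<in> GPi Imax)"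
      unfolding admissible_set_def by auto
    have "\<forall>S E I. seir_sol \<eta> \<beta> \<gamma> x0 S E I \<longrightarrow>
           (E \<longlongrightarrow> 0) at_top \<and> (I \<longlongrightarrow> 0) at_top \<and> (\<forall>t\<ge>0. I t \<le> Imax)"
    proof (intro allI impI)
      fix S E I assume sol: "seir_sol \<eta> \<beta> \<gamma> x0 S E I"
      have "\<forall>t\<ge>0. I t \<le> Imax" using inv sol unfolding GPi_def by auto
      thus "(E \<longlongrightarrow> 0) at_top \<and> (I \<longlongrightarrow> 0) at_top \<and> (\<forall>t\<ge>0. I t \<le> Imax)"
        using p1[OF xg c sol] by simp
    qed
    thus "\<exists>(\<beta>,\<gamma>) \<in> controls bmin bnom gnom gmax. \<forall>S E I.
         seir_sol \<eta> \<beta> \<gamma> x0 S E I \<longrightarrow>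
           (E \<longlongrightarrow> 0) at_top \<and> (I \<longlongrightarrow> 0) at_top \<and> (\<forall>t\<ge>0. I t \<le> Imax)"
      using c by blast
  qed
  have C: "\<forall>x0 \<in> mrpi_set \<eta> bmin bnom gnom gmax Imax.
       \<forall>(\<beta>,\<gamma>) \<in> controls bmin bnom gnom gmax. \<forall>S E I.
         seir_sol \<eta> \<beta> \<gamma> x0 S E I \<longrightarrow>
           (E \<longlongrightarrow> 0) at_top \<and> (I \<longlongrightarrow> 0) at_top \<and> (\<forall>t\<ge>0. I t \<le> Imax)"
  proof (intro ballI allI impI)
    fix x0 p S E I assume x0: "x0 \<in> mrpi_set \<eta> bmin bnom gnom gmax Imax"
      and p: "p \<in> controls bmin bnom gnom gmax"
    obtain \<beta> \<gamma> where pe: "p = (\<beta>, \<gamma>)" by (cases p)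
    have xg: "x0 \<in> PiSet" using x0 GP unfolding mrpi_set_def by auto
    have inv: "\<forall>S E I. seir_sol \<eta> \<beta> \<gamma> x0 S E I \<longrightarrow> (\<forall>t\<ge>0. (S t, E t, I t) \<in> GPi Imax)"
      using x0 p pe unfolding mrpi_set_def by auto
    have "\<forall>S E I. seir_sol \<eta> \<beta> \<gamma> x0 S E I \<longrightarrow>
           (E \<longlongrightarrow> 0) at_top \<and> (I \<longlongrightarrow> 0) at_top \<and> (\<forall>t\<ge>0. I t \<le> Imax)"
    proof (intro allI impI)
      fix S E I assume sol: "seir_sol \<eta> \<beta> \<gamma> x0 S E I"
      have "\<forall>t\<ge>0. I t \<le> Imax" using inv sol unfolding GPi_def by auto
      thus "(E \<longlongrightarrow> 0) at_top \<and> (I \<longlongrightarrow> 0) at_top \<and> (\<forall>t\<ge>0. I t \<le> Imax)"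
        using p1[OF xg p[unfolded pe] sol] by simp
    qed
    thus "case p of (\<beta>, \<gamma>) \<Rightarrow> \<forall>S E I. seir_sol \<eta> \<beta> \<gamma> x0 S E I \<longrightarrow>
           (E \<longlongrightarrow> 0) at_top \<and> (I \<longlongrightarrow> 0) at_top \<and> (\<forall>t\<ge>0. I t \<le> Imax)"
      unfolding pe by simp
  qed
  show ?thesis using A B C by blast
qed

end
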